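(* Let $G$ be a cubic graph of order $2n$ with $\chi'_{[n]}(G)=4$. Then $\chi'_{[n-1]}(G)=4$.
   Context: All graphs are finite, simple (no loops, no parallel edges), connected and cubic. For a positive integer $k$, a $[k]$-matching of $G$ is a matching of $G$ with exactly $k$ edges; an $[n]$-matching in a graph of order $2n$ is a perfect matching. The excessive $[k]$-index $\chi'_{[k]}(G)$ is the minimum number of $[k]$-matchings of $G$ whose union is $E(G)$; if some edge of $G$ lies in no $[k]$-matching, one sets $\chi'_{[k]}(G)=\infty$. *)

theory Defs
  imports Main "HOL-Library.Extended_Nat"
begin

definition simple_graph :: "'a set \<Rightarrow> 'a set set \<Rightarrow> bool" where
  "simple_graph V E \<longleftrightarrow> finite V \<and>
     (\<forall>e\<in>E. \<exists>u v. u \<in> V \<and> v \<in> V \<and> u \<noteq> v \<and> e = {u, v})"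

definition degree :: "'a set set \<Rightarrow> 'a \<Rightarrow> nat" where
  "degree E v = card {e\<in>E. v \<in> e}"

definition cubic :: "'a set \<Rightarrow> 'a set set \<Rightarrow> bool" where
  "cubic V E \<longleftrightarrow> (\<forall>v\<in>V. degree E v = 3)"

definition connected_graph :: "'a set \<Rightarrow> 'a set set \<Rightarrow> bool" where
  "connected_graph V E \<longleftrightarrow>
     (\<forall>u\<in>V. \<forall>v\<in>V. (u, v) \<in> {(x, y). {x, y} \<in> E}\<^sup>*)"

definition matching :: "'a set set \<Rightarrow> 'a set set \<Rightarrow> bool" where
  "matching E M \<longleftrightarrow> M \<subseteq> E \<and> (\<forall>e\<in>M. \<forall>f\<in>M. e \<noteq> f \<longrightarrow> e \<inter> f = {})"

definition k_matching :: "'a set set \<Rightarrow> nat \<Rightarrow> 'a set set \<Rightarrow> bool" where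
  "k_matching E k M \<longleftrightarrow> matching E M \<and> finite M \<and> card M = k"

definition excessive_index :: "'a set set \<Rightarrow> nat \<Rightarrow> enat" where
  "excessive_index E k =
     (if \<forall>e\<in>E. \<exists>M. k_matching E k M \<and> e \<in> M
      then enat (LEAST t. \<exists>S. finite S \<and> card S = t \<and>
                 (\<forall>M\<in>S. k_matching E k M) \<and> \<Union>S = E)
      else \<infinity>)"

end

theory Submission
  imports Defs
begin

lemma card4D: "card S = 4 \<Longrightarrow> \<exists>a b c d. S = {a,b,c,d} \<and> a \<noteq> b \<and> a \<noteq> c \<and> a \<noteq> d \<and> b \<noteq> c \<and> b \<noteq> d \<and> c \<noteq> d"
  by (auto simp: card_Suc_eq numeral_eq_Suc)

lemma edge2: "simple_graph V E \<Longrightarrow> e \<in> E \<Longrightarrow> \<exists>u v. u\<in>V \<and> v\<in>V \<and> u\<noteq>v \<and> e={u,v}"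
  unfolding simple_graph_def by blast

lemma edge_sub: "simple_graph V E \<Longrightarrow> e \<in> E \<Longrightarrow> e \<subseteq> V"
  using edge2 by fastforce

lemma edge_card: "simple_graph V E \<Longrightarrow> e \<in> E \<Longrightarrow> card e = 2"
  using edge2 by fastforce

lemma finV: "simple_graph V E \<Longrightarrow> finite V"
  unfolding simple_graph_def by blast

lemma finE: "simple_graph V E \<Longrightarrow> finite E"
proof -
  assume sg: "simple_graph V E"
  have "E \<subseteq> Pow V" using edge_sub[OF sg] by blast
  then show ?thesis using finV[OF sg] by (meson finite_Pow_iff finite_subset)
qed

lemma card_Union_matching:
  assumes sg: "simple_graph V E" and m: "matching E M" and f: "finite M"
  shows "card (\<Union>M) = 2 * card M"
proof -
  have sub: "M \<subseteq> E" using m unfolding matching_def by blast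
  have "card (\<Union>M) = sum card M"
  proof (rule card_Union_disjoint)
    show "pairwise disjnt M" using m unfolding matching_def pairwise_def disjnt_def by blast
    fix A assume "A \<in> M"
    then show "finite A" using edge_sub[OF sg] sub finV[OF sg] by (meson finite_subset subsetD)
  qed
  also have "\<dots> = sum (\<lambda>_. 2) M" using edge_card[OF sg] sub by (intro sum.cong) auto
  finally show ?thesis by simp
qed

lemma perfect_cover:
  assumes sg: "simple_graph V E" and cV: "card V = 2*n" and k: "k_matching E n M"
  shows "\<Union>M = V"
proof -
  have m: "matching E M" "finite M" "card M = n" using k unfolding k_matching_def by auto
  have sub: "\<Union>M \<subseteq> V" using m(1) edge_sub[OF sg] unfolding matching_def by blast
  have "card (\<Union>M) = card V" using card_Union_matching[OF sg m(1,2)] m(3) cV by simp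
  then show ?thesis using card_subset_eq[OF finV[OF sg] sub] by simp
qed

lemma unique_at: "matching E M \<Longrightarrow> e\<in>M \<Longrightarrow> f\<in>M \<Longrightarrow> v\<in>e \<Longrightarrow> v\<in>f \<Longrightarrow> e = f"
  unfolding matching_def by blast

lemma deg_le:
  assumes cub: "cubic V E" and fE: "finite E" and v: "v \<in> V" and X: "X \<subseteq> {e\<in>E. v\<in>e}"
  shows "card X \<le> 3"
proof -
  have "card X \<le> card {e\<in>E. v\<in>e}" using X fE by (intro card_mono) auto
  then show ?thesis using cub v unfolding cubic_def degree_def by simp
qed

lemma deg_ex:
  assumes cub: "cubic V E" and fE: "finite E" and v: "v \<in> V" and X: "finite X" "card X < 3"
  shows "\<exists>e\<in>E. v\<in>e \<and> e\<notin>X"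
proof (rule ccontr)
  assume "\<not> ?thesis"
  then have "{e\<in>E. v\<in>e} \<subseteq> X" by blast
  then have "card {e\<in>E. v\<in>e} \<le> card X" using X by (intro card_mono) auto
  then show False using cub v X unfolding cubic_def degree_def by simp
qed

lemma third:
  assumes sg: "simple_graph V E" and cub: "cubic V E" and cV: "card V = 2*n"
    and A: "k_matching E n A" and B: "k_matching E n B" and AB: "A \<inter> B = {}"
  shows "k_matching E n (E - A - B)"
proof -
  have fE: "finite E" using finE[OF sg] .
  have mA: "matching E A" and mB: "matching E B" using A B unfolding k_matching_def by auto
  have cA: "\<Union>A = V" and cB: "\<Union>B = V" using perfect_cover[OF sg cV] A B by auto
  let ?C = "E - A - B"
  have mC: "matching E ?C"
    unfolding matching_def
  proof (intro conjI ballI impI)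
    show "?C \<subseteq> E" by blast
    fix e f assume e: "e \<in> ?C" and f: "f \<in> ?C" and ef: "e \<noteq> f"
    show "e \<inter> f = {}"
    proof (rule ccontr)
      assume "e \<inter> f \<noteq> {}"
      then obtain v where ve: "v \<in> e" and vf: "v \<in> f" by blast
      have vV: "v \<in> V" using edge_sub[OF sg] e ve by blast
      obtain a where a: "a \<in> A" "v \<in> a" using cA vV by blast
      obtain b where b: "b \<in> B" "v \<in> b" using cB vV by blast
      have aE: "a \<in> E" "b \<in> E" using a b mA mB unfolding matching_def by auto
      have "card {a,b,e,f} \<le> 3"
        by (rule deg_le[OF cub fE vV]) (use a b aE e f ve vf in auto)
      moreover have "a \<noteq> b" using a b AB by blast
      moreover have "e \<noteq> a" "e \<noteq> b" "f \<noteq> a" "f \<noteq> b" using e f a b by auto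
      ultimately show False using ef by (simp add: card_insert_if)
    qed
  qed
  have cC: "\<Union>?C = V"
  proof
    show "\<Union>?C \<subseteq> V" using edge_sub[OF sg] by blast
    show "V \<subseteq> \<Union>?C"
    proof
      fix v assume vV: "v \<in> V"
      obtain a where a: "a \<in> A" "v \<in> a" using cA vV by blast
      obtain b where b: "b \<in> B" "v \<in> b" using cB vV by blast
      have "card {a,b} < 3" by (simp add: card_insert_if)
      then obtain c where c: "c \<in> E" "v \<in> c" "c \<notin> {a,b}" using deg_ex[OF cub fE vV, of "{a,b}"] by auto
      have "c \<notin> A" using unique_at[OF mA _ a(1) _ a(2)] c by blast
      moreover have "c \<notin> B" using unique_at[OF mB _ b(1) _ b(2)] c by blast
      ultimately show "v \<in> \<Union>?C" using c by blast
    qed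
  qed
  have fC: "finite ?C" using fE by blast
  have "2 * card ?C = 2 * n" using card_Union_matching[OF sg mC fC] cC cV by simp
  then show ?thesis using mC fC unfolding k_matching_def by simp
qed

lemma diff_edge:
  assumes sg: "simple_graph V E" and cV: "card V = 2*n" and A: "k_matching E n A" and a: "a \<in> A"
  shows "a = V - \<Union>(A - {a})"
proof -
  have mA: "matching E A" using A unfolding k_matching_def by auto
  have cA: "\<Union>A = V" using perfect_cover[OF sg cV A] .
  have "a \<inter> \<Union>(A - {a}) = {}" using mA a unfolding matching_def by blast
  moreover have "a \<union> \<Union>(A - {a}) = V" using cA a by blast
  ultimately show ?thesis by blast
qed

lemma diff_inj:
  assumes sg: "simple_graph V E" and cV: "card V = 2*n" and A: "k_matching E n A" and a: "a \<in> A"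
    and B: "k_matching E n B" and b: "b \<in> B" and eq: "A - {a} = B - {b}"
  shows "A = B"
proof -
  have "a = b" using diff_edge[OF sg cV A a] diff_edge[OF sg cV B b] eq by simp
  then show ?thesis using eq a b by blast
qed

lemma lower:
  assumes sg: "simple_graph V E" and cub: "cubic V E" and cV: "card V = 2*n"
    and kn: "k < n" and fS: "finite S" and SM: "\<forall>M\<in>S. k_matching E k M" and SU: "\<Union>S = E"
  shows "4 \<le> card S"
proof -
  have fE: "finite E" using finE[OF sg] .
  have key: "3 \<le> card S \<and> (card S \<le> 3 \<longrightarrow> (\<forall>M\<in>S. \<exists>e\<in>M. w\<in>e))" if wV: "w \<in> V" for w
  proof -
    let ?X = "{e\<in>E. w\<in>e}"
    have cX: "card ?X = 3" using cub wV unfolding cubic_def degree_def by simp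
    have "\<forall>e\<in>?X. \<exists>M\<in>S. e\<in>M" using SU by blast
    then obtain g where g: "\<forall>e\<in>?X. g e \<in> S \<and> e \<in> g e" by metis
    have inj: "inj_on g ?X"
    proof (rule inj_onI)
      fix e f assume e: "e \<in> ?X" and f: "f \<in> ?X" and gef: "g e = g f"
      have "matching E (g e)" using g e SM unfolding k_matching_def by blast
      then show "e = f" using unique_at[of E "g e" e f w] g e f gef by auto
    qed
    have cg: "card (g ` ?X) = 3" using card_image[OF inj] cX by simp
    have sub: "g ` ?X \<subseteq> S" using g by blast
    have "3 \<le> card S" using card_mono[OF fS sub] cg by simp
    moreover have "card S \<le> 3 \<longrightarrow> (\<forall>M\<in>S. \<exists>e\<in>M. w\<in>e)"
    proof (intro impI ballI)
      fix M assume "card S \<le> 3" and M: "M \<in> S"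
      then have "g ` ?X = S" using card_subset_eq[OF fS sub] cg card_mono[OF fS sub] by simp
      then obtain e where "e \<in> ?X" "M = g e" using M by blast
      then show "\<exists>e\<in>M. w\<in>e" using g by blast
    qed
    ultimately show ?thesis by blast
  qed
  show ?thesis
  proof (rule ccontr)
    assume nle: "\<not> 4 \<le> card S"
    have "V \<noteq> {}" using cV kn finV[OF sg] by auto
    then obtain v where vV: "v \<in> V" by blast
    have "3 \<le> card S" using key[OF vV] by blast
    then have "S \<noteq> {}" by auto
    then obtain M where M: "M \<in> S" by blast
    have "V \<subseteq> \<Union>M" using key nle M by fastforce
    moreover have kM: "k_matching E k M" using SM M by blast
    moreover have "\<Union>M \<subseteq> V" using kM edge_sub[OF sg] unfolding k_matching_def matching_def by blast
    ultimately have "\<Union>M = V" by blast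
    moreover have "card (\<Union>M) = 2 * k" using card_Union_matching[OF sg] kM unfolding k_matching_def by auto
    ultimately show False using cV kn by simp
  qed
qed

theorem mainTheorem7:
  fixes V :: "'a set" and E :: "'a set set" and n :: nat
  assumes "simple_graph V E" and "connected_graph V E" and "cubic V E"
    and "card V = 2 * n"
    and "excessive_index E n = 4"
  shows "excessive_index E (n - 1) = 4"
proof -
  note sg = assms(1) and cub = assms(3) and cV = assms(4)
  have fE: "finite E" using finE[OF sg] .
  define P where "P = (\<lambda>k t. \<exists>S. finite S \<and> card S = t \<and> (\<forall>M\<in>S. k_matching E k M) \<and> \<Union>S = E)"
  have cov: "\<forall>e\<in>E. \<exists>M. k_matching E n M \<and> e \<in> M"
    using assms(5) unfolding excessive_index_def by (auto split: if_splits)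
  have L4: "(LEAST t. P n t) = 4"
    using assms(5) cov unfolding excessive_index_def P_def by (simp add: numeral_eq_enat)
  define S0 where "S0 = (\<lambda>e. SOME M. k_matching E n M \<and> e \<in> M) ` E"
  have S0: "\<forall>e\<in>E. k_matching E n (SOME M. k_matching E n M \<and> e \<in> M) \<and> e \<in> (SOME M. k_matching E n M \<and> e \<in> M)"
    using cov by (metis (mono_tags, lifting) someI_ex)
  have "P n (card S0)"
    unfolding P_def
  proof (intro exI conjI)
    show "finite S0" using fE S0_def by simp
    show "\<forall>M\<in>S0. k_matching E n M" using S0 S0_def by blast
    show "\<Union>S0 = E"
    proof
      show "\<Union>S0 \<subseteq> E" using S0 S0_def unfolding k_matching_def matching_def by blast
      show "E \<subseteq> \<Union>S0" using S0 S0_def by blast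
    qed
  qed simp
  then have P4: "P n 4" using LeastI[of "P n"] L4 by metis
  have not3: "\<not> P n 3" using not_less_Least[of 3 "P n"] L4 by simp
  obtain S4 where S4: "finite S4" "card S4 = 4" "\<forall>M\<in>S4. k_matching E n M" "\<Union>S4 = E"
    using P4 unfolding P_def by blast
  obtain M1 M2 M3 M4 where Ms: "S4 = {M1,M2,M3,M4}" and d: "M1 \<noteq> M2" "M1 \<noteq> M3" "M1 \<noteq> M4" "M2 \<noteq> M3" "M2 \<noteq> M4" "M3 \<noteq> M4"
    using card4D[OF S4(2)] by blast
  have k1: "k_matching E n M1" and k2: "k_matching E n M2" and k3: "k_matching E n M3" and k4: "k_matching E n M4"
    using S4(3) Ms by auto
  have n1: "n \<ge> 1"
  proof (rule ccontr)
    assume "\<not> n \<ge> 1"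
    then have "n = 0" by simp
    then have "M1 = {}" "M2 = {}" using k1 k2 unfolding k_matching_def by (auto simp: card_eq_0_iff)
    then show False using d by simp
  qed
  have inter: "A \<inter> B \<noteq> {}" if A: "k_matching E n A" and B: "k_matching E n B" for A B
  proof
    assume AB: "A \<inter> B = {}"
    have C: "k_matching E n (E - A - B)" using third[OF sg cub cV A B AB] .
    have ne: "A \<noteq> {}" "B \<noteq> {}" "E - A - B \<noteq> {}" using A B C n1 unfolding k_matching_def by (metis card.empty not_one_le_zero)+
    have "P n 3"
      unfolding P_def
    proof (intro exI conjI)
      show "finite {A, B, E - A - B}" by simp
      show "card {A, B, E - A - B} = 3" using AB ne by (auto simp: card_insert_if)
      show "\<forall>M\<in>{A, B, E - A - B}. k_matching E n M" using A B C by auto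
      show "\<Union>{A, B, E - A - B} = E" using A B unfolding k_matching_def matching_def by auto
    qed
    then show False using not3 by simp
  qed
  have mM: "matching E M1" "matching E M2" "matching E M3" "matching E M4"
    using k1 k2 k3 k4 unfolding k_matching_def by auto
  have notall: "\<not> (e \<in> M1 \<and> e \<in> M2 \<and> e \<in> M3 \<and> e \<in> M4)" for e
  proof
    assume all: "e \<in> M1 \<and> e \<in> M2 \<and> e \<in> M3 \<and> e \<in> M4"
    then have eE: "e \<in> E" using mM unfolding matching_def by blast
    obtain u w where uw: "u \<in> V" "w \<in> V" "u \<noteq> w" "e = {u,w}" using edge2[OF sg eE] by blast
    have "card {e} < 3" by simp
    then obtain f where f: "f \<in> E" "u \<in> f" "f \<notin> {e}" using deg_ex[OF cub fE uw(1), of "{e}"] by auto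
    then have "f \<in> M1 \<or> f \<in> M2 \<or> f \<in> M3 \<or> f \<in> M4" using S4(4) Ms by blast
    then show False using unique_at[OF mM(1), of e f u] unique_at[OF mM(2), of e f u]
        unique_at[OF mM(3), of e f u] unique_at[OF mM(4), of e f u] all f uw by auto
  qed
  obtain e1 where e1: "e1 \<in> M1" "e1 \<in> M2" using inter[OF k1 k2] by blast
  obtain e2 where e2: "e2 \<in> M2" "e2 \<in> M3" using inter[OF k2 k3] by blast
  obtain e3 where e3: "e3 \<in> M3" "e3 \<in> M4" using inter[OF k3 k4] by blast
  obtain e4 where e4: "e4 \<in> M4" "e4 \<in> M1" using inter[OF k4 k1] by blast
  define N1 where "N1 = M1 - {e1}"
  define N2 where "N2 = M2 - {e2}"
  define N3 where "N3 = M3 - {e3}"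
  define N4 where "N4 = M4 - {e4}"
  have covN: "f \<in> N1 \<or> f \<in> N2 \<or> f \<in> N3 \<or> f \<in> N4" if f: "f \<in> E" for f
  proof -
    have "f \<in> M1 \<or> f \<in> M2 \<or> f \<in> M3 \<or> f \<in> M4" using S4(4) Ms f by blast
    then show ?thesis using notall[of f] e1 e2 e3 e4 unfolding N1_def N2_def N3_def N4_def by blast
  qed
  have kN: "k_matching E (n-1) N" if "N = M - {e}" "k_matching E n M" "e \<in> M" for N M e
    using that unfolding k_matching_def matching_def by auto
  have kN1: "k_matching E (n-1) N1" using kN[OF N1_def k1 e1(1)] .
  have kN2: "k_matching E (n-1) N2" using kN[OF N2_def k2 e2(1)] .
  have kN3: "k_matching E (n-1) N3" using kN[OF N3_def k3 e3(1)] .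
  have kN4: "k_matching E (n-1) N4" using kN[OF N4_def k4 e4(1)] .
  have dN: "N1 \<noteq> N2" "N1 \<noteq> N3" "N1 \<noteq> N4" "N2 \<noteq> N3" "N2 \<noteq> N4" "N3 \<noteq> N4"
    using d diff_inj[OF sg cV] k1 k2 k3 k4 e1 e2 e3 e4 unfolding N1_def N2_def N3_def N4_def
    by metis+
  have PN: "P (n-1) 4"
    unfolding P_def
  proof (intro exI conjI)
    show "finite {N1,N2,N3,N4}" by simp
    show "card {N1,N2,N3,N4} = 4" using dN by (simp add: card_insert_if)
    show "\<forall>M\<in>{N1,N2,N3,N4}. k_matching E (n-1) M" using kN1 kN2 kN3 kN4 by auto
    show "\<Union>{N1,N2,N3,N4} = E"
    proof
      show "\<Union>{N1,N2,N3,N4} \<subseteq> E" using kN1 kN2 kN3 kN4 unfolding k_matching_def matching_def by auto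
      show "E \<subseteq> \<Union>{N1,N2,N3,N4}" using covN by blast
    qed
  qed
  have low: "\<And>t. P (n-1) t \<Longrightarrow> 4 \<le> t"
    unfolding P_def using lower[OF sg cub cV, of "n-1"] n1 by auto
  have L: "(LEAST t. P (n-1) t) = 4" using Least_equality[of "P (n-1)" 4] PN low by blast
  have condN: "\<forall>e\<in>E. \<exists>M. k_matching E (n-1) M \<and> e \<in> M"
    using covN kN1 kN2 kN3 kN4 by blast
  show ?thesis using L condN unfolding excessive_index_def P_def by (simp add: numeral_eq_enat)
qed

end
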